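(* Let $G=(\mathcal V,\mathcal E)$ be a connected non-bipartite graph and consider the general stochastic matching model on $G$ with i.i.d. arrivals of law $\mu$ (with full support on $\mathcal V$) under the First Come, First Matched (FCFM) policy. Then the queue-detail Markov chain $(W_n)_{n\ge 0}$ is positive recurrent if and only if $\mu\in\textsc{Ncond}(G)$. In that case the unique stationary probability of $(W_n)$ is $$\Pi_W(w)=\alpha\prod_{\ell=1}^{q}\frac{\mu(w_\ell)}{\mu\big(\mathcal E(\{w_1,\dots,w_\ell\})\big)},\qquad w=w_1\cdots w_q\in\mathbb W$$ (with $\Pi_W(\emptyset)=\alpha$), where $\alpha>0$ is the normalizing constant making $\Pi_W$ a probability measure on $\mathbb W$.
   Context: $G=(\mathcal V,\mathcal E)$ is a finite connected simple graph, $\mathcal V=\{1,\dots,|\mathcal V|\}$; write $u - v$ if $\{u,v\}\in\mathcal E$. For $U\subset\mathcal V$, $\mathcal E(U)=\{v\in\mathcal V:\exists u\in U,\ u - v\}$. An independent set is a nonempty set of pairwise non-adjacent nodes; $\mathbb I(G)$ is the set of independent sets. $\textsc{Ncond}(G)$ is the set of probability measures $\mu$ on $\mathcal V$ with full support such that $\mu(\mathcal I)<\mu(\mathcal E(\mathcal I))$ for every $\mathcal I\in\mathbb I(G)$. Model: items arrive one at a time at times $n=1,2,\dots$; the classes $V_1,V_2,\dots$ are i.i.d. with law $\mu$. An arriving item of class $i$ is matched with an item present in the buffer whose class $j$ satisfies $i - j$, if there is one (and both items leave); otherwise it is stored in the buffer. Under FCFM the arriving item is matched with the oldest (earliest arrived)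 compatible item present. The queue detail $W_n\in\mathcal V^*$ is the word formed by the classes of the unmatched items present after the $n$-th arrival, in order of arrival, with $W_0=\emptyset$; it is a Markov chain with values in $\mathbb W=\{w\in\mathcal V^*:\ |w|_i|w|_j=0\ \text{for all } i - j\}$, where $|w|_i$ is the number of occurrences of letter $i$ in $w$. *)

theory Defs
  imports "HOL-Probability.Probability"
begin

definition simple_graph :: "nat \<Rightarrow> (nat \<Rightarrow> nat \<Rightarrow> bool) \<Rightarrow> bool" where
  "simple_graph N E \<longleftrightarrow> (\<forall>u v. E u v \<longrightarrow> u \<in> {1..N} \<and> v \<in> {1..N} \<and> E v u \<and> u \<noteq> v)"

definition connected_graph :: "nat \<Rightarrow> (nat \<Rightarrow> nat \<Rightarrow> bool) \<Rightarrow> bool" where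
  "connected_graph N E \<longleftrightarrow> (\<forall>u\<in>{1..N}. \<forall>v\<in>{1..N}. E\<^sup>*\<^sup>* u v)"

definition bipartite :: "nat \<Rightarrow> (nat \<Rightarrow> nat \<Rightarrow> bool) \<Rightarrow> bool" where
  "bipartite N E \<longleftrightarrow> (\<exists>A \<subseteq> {1..N}. \<forall>u v. E u v \<longrightarrow> (u \<in> A \<longleftrightarrow> v \<notin> A))"

definition nbh :: "nat \<Rightarrow> (nat \<Rightarrow> nat \<Rightarrow> bool) \<Rightarrow> nat set \<Rightarrow> nat set" where
  "nbh N E U = {v \<in> {1..N}. \<exists>u\<in>U. E u v}"

definition indep_sets :: "nat \<Rightarrow> (nat \<Rightarrow> nat \<Rightarrow> bool) \<Rightarrow> nat set set" where
  "indep_sets N E = {I. I \<subseteq> {1..N} \<and> I \<noteq> {} \<and> (\<forall>u\<in>I. \<forall>v\<in>I. \<not> E u v)}"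

definition Ncond :: "nat \<Rightarrow> (nat \<Rightarrow> nat \<Rightarrow> bool) \<Rightarrow> nat pmf set" where
  "Ncond N E = {\<mu>. set_pmf \<mu> = {1..N} \<and>
      (\<forall>I \<in> indep_sets N E. measure_pmf.prob \<mu> I < measure_pmf.prob \<mu> (nbh N E I))}"

text \<open>FCFM update of the queue detail (oldest item first) upon arrival of class i.\<close>
fun fcfm_step :: "(nat \<Rightarrow> nat \<Rightarrow> bool) \<Rightarrow> nat list \<Rightarrow> nat \<Rightarrow> nat list" where
  "fcfm_step E [] i = [i]"
| "fcfm_step E (x # w) i = (if E i x then w else x # fcfm_step E w i)"

definition queue_after :: "(nat \<Rightarrow> nat \<Rightarrow> bool) \<Rightarrow> nat list \<Rightarrow> nat list" where
  "queue_after E vs = foldl (fcfm_step E) [] vs"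

definition admissible_words :: "nat \<Rightarrow> (nat \<Rightarrow> nat \<Rightarrow> bool) \<Rightarrow> nat list set" where
  "admissible_words N E = {w. set w \<subseteq> {1..N} \<and>
      (\<forall>i j. E i j \<longrightarrow> count_list w i * count_list w j = 0)}"

definition trans_prob :: "nat \<Rightarrow> (nat \<Rightarrow> nat \<Rightarrow> bool) \<Rightarrow> nat pmf \<Rightarrow> nat list \<Rightarrow> nat list \<Rightarrow> real" where
  "trans_prob N E \<mu> w w' = (\<Sum>i\<in>{1..N}. if fcfm_step E w i = w' then pmf \<mu> i else 0)"

definition first_return_prob :: "nat \<Rightarrow> (nat \<Rightarrow> nat \<Rightarrow> bool) \<Rightarrow> nat pmf \<Rightarrow> nat \<Rightarrow> real" where
  "first_return_prob N E \<mu> n =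
     (\<Sum>vs \<in> {vs. length vs = n \<and> set vs \<subseteq> {1..N}}.
        if queue_after E vs = [] \<and> (\<forall>k. 0 < k \<and> k < n \<longrightarrow> queue_after E (take k vs) \<noteq> [])
        then (\<Prod>v\<leftarrow>vs. pmf \<mu> v) else 0)"

text \<open>Positive recurrence (of the state \<emptyset>, from which the chain starts): the return time
  to \<emptyset> is almost surely finite and has finite expectation.\<close>
definition positive_recurrent :: "nat \<Rightarrow> (nat \<Rightarrow> nat \<Rightarrow> bool) \<Rightarrow> nat pmf \<Rightarrow> bool" where
  "positive_recurrent N E \<mu> \<longleftrightarrow>
     (\<lambda>n. first_return_prob N E \<mu> (Suc n)) sums 1 \<and>
     summable (\<lambda>n. real (Suc n) * first_return_prob N E \<mu> (Suc n))"

definition stationary_prob :: "nat \<Rightarrow> (nat \<Rightarrow> nat \<Rightarrow> bool) \<Rightarrow> nat pmf \<Rightarrow> (nat list \<Rightarrow> real) \<Rightarrow> bool" where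
  "stationary_prob N E \<mu> p \<longleftrightarrow>
     (\<forall>w \<in> admissible_words N E. p w \<ge> 0) \<and>
     (p has_sum 1) (admissible_words N E) \<and>
     (\<forall>w' \<in> admissible_words N E.
        ((\<lambda>w. p w * trans_prob N E \<mu> w w') has_sum p w') (admissible_words N E))"

definition Pi_W :: "nat \<Rightarrow> (nat \<Rightarrow> nat \<Rightarrow> bool) \<Rightarrow> nat pmf \<Rightarrow> real \<Rightarrow> nat list \<Rightarrow> real" where
  "Pi_W N E \<mu> \<alpha> w = \<alpha> * (\<Prod>l<length w.
      pmf \<mu> (w ! l) / measure_pmf.prob \<mu> (nbh N E (set (take (Suc l) w))))"

end

theory Submission
  imports Defs
begin



lemma step_noadj: "(\<forall>z\<in>set x. \<not> E i z) \<Longrightarrow> fcfm_step E x i = x @ [i]"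
  by (induction x) auto

lemma step_adj: "(\<forall>z\<in>set p. \<not> E i z) \<Longrightarrow> E i a \<Longrightarrow> fcfm_step E (p @ a # s) i = p @ s"
  by (induction p) auto

lemma step_cases:
  "(\<forall>z\<in>set w. \<not> E i z) \<and> fcfm_step E w i = w @ [i] \<or>
   (\<exists>p a s. w = p @ a # s \<and> E i a \<and> (\<forall>z\<in>set p. \<not> E i z) \<and> fcfm_step E w i = p @ s)"
proof (induction w)
  case Nil then show ?case by simp
next
  case (Cons x w)
  show ?case
  proof (cases "E i x")
    case True
    then show ?thesis by (intro disjI2 exI[of _ "[]"] exI[of _ x] exI[of _ w]) auto
  next
    case False
    from Cons.IH show ?thesis
    proof
      assume "(\<forall>z\<in>set w. \<not> E i z) \<and> fcfm_step E w i = w @ [i]"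
      with False show ?thesis by auto
    next
      assume "\<exists>p a s. w = p @ a # s \<and> E i a \<and> (\<forall>z\<in>set p. \<not> E i z) \<and> fcfm_step E w i = p @ s"
      then obtain p a s where "w = p @ a # s" "E i a" "\<forall>z\<in>set p. \<not> E i z" "fcfm_step E w i = p @ s" by blast
      with False show ?thesis by (intro disjI2 exI[of _ "x#p"] exI[of _ a] exI[of _ s]) auto
    qed
  qed
qed

lemma step_length: "length (fcfm_step E w i) = Suc (length w) \<or> length w = Suc (length (fcfm_step E w i))"
  using step_cases[of w E i] by auto

lemma step_set: "set (fcfm_step E w i) \<subseteq> insert i (set w)"
  using step_cases[of w E i] by auto

lemma adm_iff: "w \<in> admissible_words N E \<longleftrightarrow> set w \<subseteq> {1..N} \<and> (\<forall>a\<in>set w. \<forall>b\<in>set w. \<not> E a b)"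
  unfolding admissible_words_def by (auto simp: count_list_0_iff)

lemma qa_snoc: "queue_after E (vs @ [v]) = fcfm_step E (queue_after E vs) v"
  by (simp add: queue_after_def)

lemma qa_length: "length (queue_after E vs) \<le> length vs"
proof (induction vs rule: rev_induct)
  case Nil then show ?case by (simp add: queue_after_def)
next
  case (snoc x xs) then show ?case using step_length[of E "queue_after E xs" x] by (auto simp: qa_snoc)
qed




locale fcfm =
  fixes N :: nat and E :: "nat \<Rightarrow> nat \<Rightarrow> bool" and \<mu> :: "nat pmf"
  assumes sg: "simple_graph N E" and supp: "set_pmf \<mu> = {1..N}"
    and nbex: "\<And>a. a \<in> {1..N} \<Longrightarrow> \<exists>b. E a b"
begin

abbreviation "V \<equiv> {1..N}"
abbreviation "W \<equiv> admissible_words N E"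
abbreviation "Pm A \<equiv> measure_pmf.prob \<mu> A"
abbreviation "nb U \<equiv> nbh N E U"
abbreviation "K \<equiv> trans_prob N E \<mu>"

lemma Esym: "E u v \<Longrightarrow> E v u" using sg unfolding simple_graph_def by blast
lemma Esym_iff: "E u v = E v u" using Esym by blast
lemma Eirr: "\<not> E u u" using sg unfolding simple_graph_def by blast
lemma EV: "E u v \<Longrightarrow> u \<in> V \<and> v \<in> V" using sg unfolding simple_graph_def by blast

lemma pmf_pos: "x \<in> V \<Longrightarrow> pmf \<mu> x > 0"
  using supp by (metis pmf_nonneg set_pmf_iff order_le_less)
lemma pmf_zero: "x \<notin> V \<Longrightarrow> pmf \<mu> x = 0"
  using supp by (metis set_pmf_iff)

lemma Pm_sum: "A \<subseteq> V \<Longrightarrow> Pm A = sum (pmf \<mu>) A"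
  by (rule measure_measure_pmf_finite) (auto intro: finite_subset)

lemma nb_sub: "nb U \<subseteq> V" by (auto simp: nbh_def)

lemma sumV: "sum (pmf \<mu>) V = 1"
  by (rule sum_pmf_eq_1) (use supp in auto)

lemma nb_pos: "u \<in> U \<Longrightarrow> u \<in> V \<Longrightarrow> Pm (nb U) > 0"
proof -
  assume u: "u \<in> U" "u \<in> V"
  obtain b where b: "E u b" using nbex[OF u(2)] by blast
  then have bn: "b \<in> nb U" using u EV[OF b] by (auto simp: nbh_def)
  have "pmf \<mu> b \<le> sum (pmf \<mu>) (nb U)"
    by (rule member_le_sum) (use bn in \<open>auto intro: finite_subset[OF nb_sub]\<close>)
  moreover have "pmf \<mu> b > 0" using pmf_pos EV[OF b] by blast
  ultimately show ?thesis using Pm_sum[OF nb_sub] by simp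
qed

lemma nb_empty: "nb {} = {}" by (auto simp: nbh_def)

lemma Pm_nonneg: "Pm A \<ge> 0" by simp

fun PS :: "nat set \<Rightarrow> nat list \<Rightarrow> real" where
  "PS S [] = 1"
| "PS S (x # w) = pmf \<mu> x / Pm (nb (insert x S)) * PS (insert x S) w"

lemma PS_nonneg: "PS S w \<ge> 0"
  by (induction w arbitrary: S) auto

lemma PS_pos: "set w \<subseteq> V \<Longrightarrow> PS S w > 0"
proof (induction w arbitrary: S)
  case Nil then show ?case by simp
next
  case (Cons x w)
  then have "pmf \<mu> x > 0" "Pm (nb (insert x S)) > 0" using pmf_pos nb_pos[of x "insert x S"] by auto
  with Cons show ?case by auto
qed

lemma PS_prod: "(\<Prod>l<length w. pmf \<mu> (w ! l) / Pm (nb (S \<union> set (take (Suc l) w)))) = PS S w"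
proof (induction w arbitrary: S)
  case Nil then show ?case by simp
next
  case (Cons x w)
  have "(\<Prod>l<length (x#w). pmf \<mu> ((x#w) ! l) / Pm (nb (S \<union> set (take (Suc l) (x#w)))))
     = pmf \<mu> x / Pm (nb (insert x S)) *
       (\<Prod>l<length w. pmf \<mu> (w ! l) / Pm (nb (insert x S \<union> set (take (Suc l) w))))"
    unfolding length_Cons prod.lessThan_Suc_shift by (simp add: insert_commute)
  then show ?case by (simp only: Cons.IH PS.simps)
qed

lemma Pi_W_PS: "Pi_W N E \<mu> \<alpha> w = \<alpha> * PS {} w"
  using PS_prod[of w "{}"] by (simp add: Pi_W_def)

lemma PS_snoc: "PS S (w @ [x]) = PS S w * pmf \<mu> x / Pm (nb (insert x (S \<union> set w)))"
  by (induction w arbitrary: S) (auto simp: insert_commute)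

lemma PS_append: "PS S (p @ u) = PS S p * PS (S \<union> set p) u"
  by (induction p arbitrary: S) auto

definition ins :: "nat \<Rightarrow> nat \<Rightarrow> nat list \<Rightarrow> nat list" where
  "ins k j v = take k v @ j # drop k v"

lemma T_lemma:
  assumes "j \<in> V" "set v \<subseteq> V"
  shows "(\<Sum>k\<le>length v. PS S (ins k j v) *
            (Pm (nb (insert j (S \<union> set (take k v)))) - Pm (nb (S \<union> set (take k v)))))
         = pmf \<mu> j * (PS S v - Pm (nb S) / Pm (nb (insert j S)) * PS (insert j S) v)"
  using assms(2)
proof (induction v arbitrary: S)
  case Nil
  have b: "Pm (nb (insert j S)) > 0" using nb_pos[of j "insert j S"] assms(1) by auto
  show ?case using b by (simp add: ins_def field_simps)
next
  case (Cons y v)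
  have yV: "y \<in> V" and vV: "set v \<subseteq> V" using Cons.prems by auto
  define a where "a = Pm (nb S)"
  define b where "b = Pm (nb (insert j S))"
  define c where "c = Pm (nb (insert y S))"
  define d where "d = Pm (nb (insert y (insert j S)))"
  define P1 where "P1 = PS (insert y S) v"
  define P2 where "P2 = PS (insert y (insert j S)) v"
  have bp: "b > 0" unfolding b_def using nb_pos[of j "insert j S"] assms(1) by auto
  have cp: "c > 0" unfolding c_def using nb_pos[of y "insert y S"] yV by auto
  have dp: "d > 0" unfolding d_def using nb_pos[of y "insert y (insert j S)"] yV by auto
  have IH: "(\<Sum>k\<le>length v. PS (insert y S) (ins k j v) *
            (Pm (nb (insert j (insert y S \<union> set (take k v)))) - Pm (nb (insert y S \<union> set (take k v)))))
         = pmf \<mu> j * (P1 - c / d * P2)"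
    using Cons.IH[OF vV, of "insert y S"] unfolding P1_def P2_def c_def d_def
    by (simp add: insert_commute)
  have "(\<Sum>k\<le>length (y#v). PS S (ins k j (y#v)) *
            (Pm (nb (insert j (S \<union> set (take k (y#v))))) - Pm (nb (S \<union> set (take k (y#v))))))
      = PS S (ins 0 j (y#v)) * (b - a) +
        (\<Sum>k\<le>length v. PS S (ins (Suc k) j (y#v)) *
            (Pm (nb (insert j (S \<union> set (take (Suc k) (y#v))))) - Pm (nb (S \<union> set (take (Suc k) (y#v))))))"
    unfolding a_def b_def by (simp add: sum.atMost_Suc_shift del: sum.atMost_Suc)
  also have "(\<Sum>k\<le>length v. PS S (ins (Suc k) j (y#v)) *
            (Pm (nb (insert j (S \<union> set (take (Suc k) (y#v))))) - Pm (nb (S \<union> set (take (Suc k) (y#v))))))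
      = pmf \<mu> y / c * (\<Sum>k\<le>length v. PS (insert y S) (ins k j v) *
            (Pm (nb (insert j (insert y S \<union> set (take k v)))) - Pm (nb (insert y S \<union> set (take k v)))))"
    unfolding sum_distrib_left c_def
    by (rule sum.cong) (auto simp: ins_def insert_commute)
  also have "PS S (ins 0 j (y#v)) = pmf \<mu> j / b * (pmf \<mu> y / d * P2)"
    unfolding b_def d_def P2_def by (simp add: ins_def insert_commute)
  finally have L: "(\<Sum>k\<le>length (y#v). PS S (ins k j (y#v)) *
            (Pm (nb (insert j (S \<union> set (take k (y#v))))) - Pm (nb (S \<union> set (take k (y#v))))))
      = pmf \<mu> j / b * (pmf \<mu> y / d * P2) * (b - a) + pmf \<mu> y / c * (pmf \<mu> j * (P1 - c / d * P2))"
    using IH by simp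
  have R: "pmf \<mu> j * (PS S (y#v) - Pm (nb S) / Pm (nb (insert j S)) * PS (insert j S) (y#v))
      = pmf \<mu> j * (pmf \<mu> y / c * P1 - a / b * (pmf \<mu> y / d * P2))"
    unfolding a_def b_def c_def d_def P1_def P2_def by (simp add: insert_commute)
  show ?case unfolding L R using bp cp dp by (simp add: field_simps)
qed

end



context fcfm begin

definition Q :: "nat list \<Rightarrow> nat list set" where
  "Q y = {x \<in> W. length x = Suc (length y) \<or> length y = Suc (length x)}"

lemma finite_Wlen: "finite {x \<in> W. length x \<le> L}"
  by (rule finite_subset[OF _ finite_lists_length_le[of V L]]) (auto simp: adm_iff)

lemma finite_Q: "finite (Q y)"
  by (rule finite_subset[OF _ finite_Wlen[of "Suc (length y)"]]) (auto simp: Q_def)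

lemma K_def': "K x y = (\<Sum>i\<in>V. if fcfm_step E x i = y then pmf \<mu> i else 0)"
  by (simp add: trans_prob_def)

lemma K_nonneg: "K x y \<ge> 0"
  unfolding K_def' by (rule sum_nonneg) auto

lemma K_zero: "x \<in> W \<Longrightarrow> x \<notin> Q y \<Longrightarrow> K x y = 0"
  unfolding K_def' Q_def by (rule sum.neutral) (use step_length[of E x] in auto)

lemma step_W: assumes "x \<in> W" "i \<in> V" shows "fcfm_step E x i \<in> W"
proof -
  have "(\<forall>z\<in>set x. \<not> E i z) \<and> fcfm_step E x i = x @ [i] \<or>
   (\<exists>p a s. x = p @ a # s \<and> E i a \<and> (\<forall>z\<in>set p. \<not> E i z) \<and> fcfm_step E x i = p @ s)"
    by (rule step_cases)
  then show ?thesis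
  proof
    assume h: "(\<forall>z\<in>set x. \<not> E i z) \<and> fcfm_step E x i = x @ [i]"
    then show ?thesis using assms Eirr by (auto simp: adm_iff Esym_iff)
  next
    assume "\<exists>p a s. x = p @ a # s \<and> E i a \<and> (\<forall>z\<in>set p. \<not> E i z) \<and> fcfm_step E x i = p @ s"
    then show ?thesis using assms by (auto simp: adm_iff)
  qed
qed

lemma K_pos_remove: assumes "a # x \<in> W" shows "K (a # x) x > 0"
proof -
  have aV: "a \<in> V" using assms by (auto simp: adm_iff)
  obtain b where b: "E a b" using nbex[OF aV] by blast
  have bV: "b \<in> V" using EV[OF b] by blast
  have "pmf \<mu> b \<le> K (a # x) x"
    unfolding K_def' using bV Esym[OF b]
    by (intro member_le_sum[where i=b, THEN order_trans[rotated]]) auto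
  moreover have "pmf \<mu> b > 0" using pmf_pos bV by blast
  ultimately show ?thesis by linarith
qed

lemma set_ins: "k \<le> length y \<Longrightarrow> set (ins k j y) = insert j (set y)"
proof -
  have "set y = set (take k y) \<union> set (drop k y)" by (metis append_take_drop_id set_append)
  then show ?thesis by (auto simp: ins_def)
qed

lemma length_ins: "k \<le> length y \<Longrightarrow> length (ins k j y) = Suc (length y)"
  by (auto simp: ins_def)

lemma balance:
  assumes yW: "y \<in> W"
  shows "(\<Sum>x\<in>Q y. PS {} x * K x y) = PS {} y"
proof -
  define Pairs where "Pairs = {xi \<in> Q y \<times> V. fcfm_step E (fst xi) (snd xi) = y}"
  define Aset where "Aset = (if y = [] then {} else {(butlast y, last y)})"
  define J where "J = V - nb (set y)"
  define Ik where "Ik = (\<lambda>j k. {i \<in> V. E i j \<and> (\<forall>z\<in>set (take k y). \<not> E i z)})"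
  define D where "D = Sigma J (\<lambda>j. Sigma {..length y} (\<lambda>k. Ik j k))"
  define g where "g = (\<lambda>(j::nat, k::nat, i::nat). (ins k j y, i))"
  have yV: "set y \<subseteq> V" and yind: "\<forall>a\<in>set y. \<forall>b\<in>set y. \<not> E a b" using yW by (auto simp: adm_iff)
  have finQV: "finite (Q y \<times> V)" using finite_Q by auto
  have S1: "(\<Sum>x\<in>Q y. PS {} x * K x y) = (\<Sum>xi\<in>Pairs. PS {} (fst xi) * pmf \<mu> (snd xi))"
  proof -
    have "(\<Sum>x\<in>Q y. PS {} x * K x y) =
        (\<Sum>x\<in>Q y. \<Sum>i\<in>V. if fcfm_step E x i = y then PS {} x * pmf \<mu> i else 0)"
      unfolding K_def' sum_distrib_left by (intro sum.cong) auto
    also have "\<dots> = (\<Sum>xi\<in>Q y \<times> V. if fcfm_step E (fst xi) (snd xi) = y then PS {} (fst xi) * pmf \<mu> (snd xi) else 0)"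
      by (subst sum.cartesian_product) (simp add: case_prod_beta)
    also have "\<dots> = (\<Sum>xi\<in>Pairs. PS {} (fst xi) * pmf \<mu> (snd xi))"
      unfolding Pairs_def by (rule sum.inter_filter[symmetric, OF finQV])
    finally show ?thesis .
  qed
  have PairsEq: "Pairs = Aset \<union> g ` D"
  proof (intro equalityI subsetI)
    fix xi assume xi: "xi \<in> Pairs"
    obtain x i where xi_eq: "xi = (x, i)" by (cases xi)
    have xQ: "x \<in> Q y" and iV: "i \<in> V" and st: "fcfm_step E x i = y" using xi xi_eq by (auto simp: Pairs_def)
    have xW: "x \<in> W" using xQ by (auto simp: Q_def)
    have xV: "set x \<subseteq> V" and xind: "\<forall>a\<in>set x. \<forall>b\<in>set x. \<not> E a b" using xW by (auto simp: adm_iff)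
    have "(\<forall>z\<in>set x. \<not> E i z) \<and> fcfm_step E x i = x @ [i] \<or>
      (\<exists>p a s. x = p @ a # s \<and> E i a \<and> (\<forall>z\<in>set p. \<not> E i z) \<and> fcfm_step E x i = p @ s)"
      by (rule step_cases)
    then show "xi \<in> Aset \<union> g ` D"
    proof
      assume "(\<forall>z\<in>set x. \<not> E i z) \<and> fcfm_step E x i = x @ [i]"
      then have "y = x @ [i]" using st by simp
      then show ?thesis unfolding Aset_def xi_eq by simp
    next
      assume "\<exists>p a s. x = p @ a # s \<and> E i a \<and> (\<forall>z\<in>set p. \<not> E i z) \<and> fcfm_step E x i = p @ s"
      then obtain p a s where h: "x = p @ a # s" "E i a" "\<forall>z\<in>set p. \<not> E i z" "y = p @ s"
        using st by auto
      have "(a, length p, i) \<in> D"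
        unfolding D_def J_def Ik_def using h xV xind iV
        by (auto simp: nbh_def)
      moreover have "g (a, length p, i) = xi" unfolding g_def xi_eq using h by (simp add: ins_def)
      ultimately show ?thesis by blast
    qed
  next
    fix xi assume "xi \<in> Aset \<union> g ` D"
    then show "xi \<in> Pairs"
    proof
      assume "xi \<in> Aset"
      then have yne: "y \<noteq> []" and xi_eq: "xi = (butlast y, last y)" by (auto simp: Aset_def split: if_splits)
      have yy: "y = butlast y @ [last y]" using yne by simp
      have bW: "butlast y \<in> W" using yW by (auto simp: adm_iff dest: in_set_butlastD)
      have lV: "last y \<in> V" using yV yne last_in_set by blast
      have "\<forall>z\<in>set (butlast y). \<not> E (last y) z" using yind yne by (auto dest: in_set_butlastD)
      then have "fcfm_step E (butlast y) (last y) = y" using step_noadj yy by metis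
      moreover have "length y = Suc (length (butlast y))" using yne by simp
      ultimately show ?thesis unfolding Pairs_def xi_eq Q_def using bW lV by auto
    next
      assume "xi \<in> g ` D"
      then obtain j k i where jki: "(j, k, i) \<in> D" and xi_eq: "xi = (ins k j y, i)"
        unfolding g_def by auto
      have jJ: "j \<in> J" and kl: "k \<le> length y" and iI: "i \<in> Ik j k" using jki by (auto simp: D_def)
      have jV: "j \<in> V" and jn: "\<forall>u\<in>set y. \<not> E u j" using jJ yV by (auto simp: J_def nbh_def)
      have "ins k j y \<in> W" using set_ins[OF kl, of j] yV jV yind jn Eirr
        by (auto simp: adm_iff Esym_iff)
      moreover have "fcfm_step E (ins k j y) i = y" using iI unfolding ins_def Ik_def
        by (subst step_adj) auto
      moreover have "i \<in> V" using iI by (auto simp: Ik_def)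
      ultimately show ?thesis unfolding Pairs_def xi_eq Q_def using length_ins[OF kl] by auto
    qed
  qed
  have disj: "Aset \<inter> g ` D = {}"
  proof -
    { fix j k i assume "(j,k,i) \<in> D" "(ins k j y, i) \<in> Aset"
      then have False using length_ins[of k y j] by (auto simp: D_def Aset_def split: if_splits) }
    then show ?thesis unfolding g_def by auto
  qed
  have injg: "inj_on g D"
  proof (rule inj_onI)
    fix t1 t2 assume t1: "t1 \<in> D" and t2: "t2 \<in> D" and eq: "g t1 = g t2"
    obtain j k i where t1e: "t1 = (j,k,i)" by (cases t1) auto
    obtain j' k' i' where t2e: "t2 = (j',k',i')" by (cases t2) auto
    have ii: "i' = i" and xx: "ins k j y = ins k' j' y" using eq by (auto simp: g_def t1e t2e)
    have h1: "k \<le> length y" "E i j" "\<forall>z\<in>set (take k y). \<not> E i z" using t1 by (auto simp: t1e D_def Ik_def)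
    have h2: "k' \<le> length y" "E i j'" "\<forall>z\<in>set (take k' y). \<not> E i z" using t2 ii by (auto simp: t2e D_def Ik_def)
    have nth1: "ins k j y ! k = j" using h1 by (simp add: ins_def nth_append)
    have nth2: "ins k' j' y ! k' = j'" using h2 by (simp add: ins_def nth_append)
    have lt: False if "a < b" "a \<le> length y" "b \<le> length y" "E i (ins a c y ! a)"
      "\<forall>z\<in>set (take b y). \<not> E i z" "ins a c y = ins b d y" for a b c d
    proof -
      have "ins b d y ! a = y ! a" using that(1,3) by (simp add: ins_def nth_append)
      then have e1: "ins a c y ! a = y ! a" using that(6) by (simp only:)
      have "take b y ! a = y ! a" "a < length (take b y)" using that(1,3) by simp_all
      then have "y ! a \<in> set (take b y)" by (metis nth_mem)
      then have "\<not> E i (y ! a)" using that(5) by blast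
      then show False using that(4) e1 by simp
    qed
    have "k = k'"
    proof (rule ccontr)
      assume "k \<noteq> k'"
      then consider "k < k'" | "k' < k" by linarith
      then show False
      proof cases
        case 1 then show False using lt[of k k' j j', OF 1 h1(1) h2(1) _ h2(3) xx] h1(2) nth1 by simp
      next
        case 2 then show False using lt[of k' k j' j, OF 2 h2(1) h1(1) _ h1(3) xx[symmetric]] h2(2) nth2 by simp
      qed
    qed
    then have "j = j'" using nth1 nth2 xx by metis
    then show "t1 = t2" using \<open>k = k'\<close> ii t1e t2e by simp
  qed
  have fJ: "finite J" unfolding J_def by simp
  have fI: "\<And>j k. finite (Ik j k)" unfolding Ik_def by simp
  have finD: "finite D" unfolding D_def J_def Ik_def by (auto intro!: finite_SigmaI)
  have finA: "finite Aset" by (simp add: Aset_def)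
  have SA: "(\<Sum>xi\<in>Aset. PS {} (fst xi) * pmf \<mu> (snd xi)) = PS {} y * Pm (nb (set y))"
  proof (cases "y = []")
    case True then show ?thesis by (simp add: Aset_def nb_empty)
  next
    case False
    have yy: "y = butlast y @ [last y]" using False by simp
    have "PS {} y = PS {} (butlast y) * pmf \<mu> (last y) / Pm (nb (insert (last y) ({} \<union> set (butlast y))))"
      by (subst yy, rule PS_snoc)
    also have "insert (last y) ({} \<union> set (butlast y)) = set y" by (subst (3) yy) auto
    finally have "PS {} y = PS {} (butlast y) * pmf \<mu> (last y) / Pm (nb (set y))" .
    moreover have "Pm (nb (set y)) > 0" using nb_pos[of "last y" "set y"] yV False by (meson last_in_set subsetD)
    ultimately show ?thesis using False by (simp add: Aset_def)
  qed
  have Ik_sum: "sum (pmf \<mu>) (Ik j k) = Pm (nb (insert j ({} \<union> set (take k y)))) - Pm (nb ({} \<union> set (take k y)))"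
    if "j \<in> J" for j k
  proof -
    define X where "X = set (take k y)"
    have e: "Ik j k = nb (insert j X) - nb X"
      unfolding Ik_def X_def nbh_def by (auto simp: Esym_iff)
    have sub: "nb X \<subseteq> nb (insert j X)" by (auto simp: nbh_def)
    have "sum (pmf \<mu>) (Ik j k) = sum (pmf \<mu>) (nb (insert j X)) - sum (pmf \<mu>) (nb X)"
      unfolding e by (rule sum_diff[OF finite_subset[OF nb_sub] sub]) simp
    then show ?thesis using Pm_sum[OF nb_sub] unfolding X_def by simp
  qed
  have SB: "(\<Sum>xi\<in>g ` D. PS {} (fst xi) * pmf \<mu> (snd xi)) = PS {} y * (1 - Pm (nb (set y)))"
  proof -
    have "(\<Sum>xi\<in>g ` D. PS {} (fst xi) * pmf \<mu> (snd xi)) = (\<Sum>t\<in>D. PS {} (fst (g t)) * pmf \<mu> (snd (g t)))"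
      by (rule sum.reindex[OF injg, unfolded comp_def])
    also have "\<dots> = (\<Sum>(j,p)\<in>D. PS {} (ins (fst p) j y) * pmf \<mu> (snd p))"
      by (rule sum.cong) (auto simp: g_def)
    also have "\<dots> = (\<Sum>j\<in>J. \<Sum>p\<in>Sigma {..length y} (Ik j). PS {} (ins (fst p) j y) * pmf \<mu> (snd p))"
      unfolding D_def by (rule sum.Sigma[symmetric]) (use fJ fI in auto)
    also have "\<dots> = (\<Sum>j\<in>J. \<Sum>k\<le>length y. \<Sum>i\<in>Ik j k. PS {} (ins k j y) * pmf \<mu> i)"
      by (intro sum.cong refl, subst sum.Sigma) (auto intro: fI simp: case_prod_beta)
    also have "\<dots> = (\<Sum>j\<in>J. \<Sum>k\<le>length y. PS {} (ins k j y) *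
        (Pm (nb (insert j ({} \<union> set (take k y)))) - Pm (nb ({} \<union> set (take k y)))))"
      by (intro sum.cong refl) (simp add: sum_distrib_left[symmetric] Ik_sum)
    also have "\<dots> = (\<Sum>j\<in>J. pmf \<mu> j * PS {} y)"
      by (intro sum.cong refl, subst T_lemma) (use yV in \<open>auto simp: J_def nb_empty\<close>)
    also have "\<dots> = PS {} y * sum (pmf \<mu>) J" by (simp add: sum_distrib_right mult.commute)
    also have "sum (pmf \<mu>) J = 1 - Pm (nb (set y))"
      unfolding J_def using sum_diff[OF _ nb_sub, of "pmf \<mu>" "set y"] sumV Pm_sum[OF nb_sub] by simp
    finally show ?thesis .
  qed
  show ?thesis
    unfolding S1 PairsEq
    by (subst sum.union_disjoint[OF finA finite_imageI[OF finD] disj], simp only: SA SB) (simp add: algebra_simps)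
qed

end



lemma sum_lists_prod:
  fixes f :: "'a \<Rightarrow> real"
  assumes "finite A"
  shows "(\<Sum>u\<in>{u. set u \<subseteq> A \<and> length u = n}. prod_list (map f u)) = (sum f A) ^ n"
proof (induction n)
  case 0
  have "{u. set u \<subseteq> A \<and> length u = 0} = {[]}" by auto
  then show ?case by simp
next
  case (Suc n)
  have inj: "inj_on (\<lambda>(xs, x). x # xs) ({xs. set xs \<subseteq> A \<and> length xs = n} \<times> A)"
    by (auto simp: inj_on_def)
  have fin: "finite {xs. set xs \<subseteq> A \<and> length xs = n}"
    using finite_lists_length_eq[OF assms] by simp
  have "(\<Sum>u\<in>{u. set u \<subseteq> A \<and> length u = Suc n}. prod_list (map f u))
      = (\<Sum>p\<in>{xs. set xs \<subseteq> A \<and> length xs = n} \<times> A. prod_list (map f ((\<lambda>(xs, x). x # xs) p)))"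
    unfolding lists_length_Suc_eq by (subst sum.reindex[OF inj]) (simp add: comp_def)
  also have "\<dots> = (\<Sum>xs\<in>{xs. set xs \<subseteq> A \<and> length xs = n}. \<Sum>x\<in>A. f x * prod_list (map f xs))"
    by (subst sum.cartesian_product) (simp add: case_prod_beta)
  also have "\<dots> = (\<Sum>xs\<in>{xs. set xs \<subseteq> A \<and> length xs = n}. sum f A * prod_list (map f xs))"
    by (rule sum.cong[OF refl], rule sum_distrib_right[symmetric])
  also have "\<dots> = (\<Sum>xs\<in>{xs. set xs \<subseteq> A \<and> length xs = n}. prod_list (map f xs)) * sum f A"
    by (subst sum_distrib_right) (simp add: mult.commute)
  finally show ?case using Suc by simp
qed

context fcfm begin

definition Wn :: "nat set \<Rightarrow> nat \<Rightarrow> nat list set" where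
  "Wn S n = {w. set w \<subseteq> V \<and> length w \<le> n \<and> (\<forall>a\<in>S \<union> set w. \<forall>b\<in>S \<union> set w. \<not> E a b)}"

definition Z :: "nat \<Rightarrow> nat set \<Rightarrow> real" where
  "Z n S = (\<Sum>w\<in>Wn S n. PS S w)"

lemma finite_Wn: "finite (Wn S n)"
  by (rule finite_subset[OF _ finite_lists_length_le[of V n]]) (auto simp: Wn_def)

lemma Wn_Suc: "Wn S (Suc n) = insert [] ((\<lambda>(x, w). x # w) ` (Sigma V (\<lambda>x. Wn (insert x S) n)))
   \<or> (\<not> (\<forall>a\<in>S. \<forall>b\<in>S. \<not> E a b))"
proof (cases "\<forall>a\<in>S. \<forall>b\<in>S. \<not> E a b")
  case True
  have "Wn S (Suc n) = insert [] ((\<lambda>(x, w). x # w) ` (Sigma V (\<lambda>x. Wn (insert x S) n)))"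
  proof (intro equalityI subsetI)
    fix w assume w: "w \<in> Wn S (Suc n)"
    show "w \<in> insert [] ((\<lambda>(x, w). x # w) ` (Sigma V (\<lambda>x. Wn (insert x S) n)))"
    proof (cases w)
      case Nil then show ?thesis by simp
    next
      case (Cons x u)
      have "(x, u) \<in> Sigma V (\<lambda>x. Wn (insert x S) n)" using w Cons by (auto simp: Wn_def)
      then show ?thesis using Cons by force
    qed
  next
    fix w assume "w \<in> insert [] ((\<lambda>(x, w). x # w) ` (Sigma V (\<lambda>x. Wn (insert x S) n)))"
    then show "w \<in> Wn S (Suc n)" using True by (auto simp: Wn_def)
  qed
  then show ?thesis by blast
qed simp

lemma Wn_notind: "\<not> (\<forall>a\<in>S. \<forall>b\<in>S. \<not> E a b) \<Longrightarrow> Wn S n = {}"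
  by (auto simp: Wn_def)

lemma Z_notind: "\<not> (\<forall>a\<in>S. \<forall>b\<in>S. \<not> E a b) \<Longrightarrow> Z n S = 0"
  by (simp add: Z_def Wn_notind)

lemma Z_0: "(\<forall>a\<in>S. \<forall>b\<in>S. \<not> E a b) \<Longrightarrow> Z 0 S = 1"
proof -
  assume "\<forall>a\<in>S. \<forall>b\<in>S. \<not> E a b"
  then have "Wn S 0 = {[]}" by (auto simp: Wn_def)
  then show ?thesis by (simp add: Z_def)
qed

lemma Z_nonneg: "Z n S \<ge> 0"
  unfolding Z_def by (rule sum_nonneg) (simp add: PS_nonneg)

lemma Z_Suc:
  "Z (Suc n) S = (if (\<forall>a\<in>S. \<forall>b\<in>S. \<not> E a b) then
      1 + (\<Sum>x\<in>V. pmf \<mu> x / Pm (nb (insert x S)) * Z n (insert x S)) else 0)"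
proof (cases "\<forall>a\<in>S. \<forall>b\<in>S. \<not> E a b")
  case False then show ?thesis by (simp only: Z_notind[OF False] if_not_P[OF False] if_False)
next
  case True
  have eq: "Wn S (Suc n) = insert [] ((\<lambda>(x, w). x # w) ` (Sigma V (\<lambda>x. Wn (insert x S) n)))"
    using Wn_Suc True by blast
  have inj: "inj_on (\<lambda>(x, w). x # w) (Sigma V (\<lambda>x. Wn (insert x S) n))"
    by (auto simp: inj_on_def)
  have fin: "finite (Sigma V (\<lambda>x. Wn (insert x S) n))" by (auto intro: finite_Wn)
  have "Z (Suc n) S = 1 + (\<Sum>w\<in>(\<lambda>(x, w). x # w) ` (Sigma V (\<lambda>x. Wn (insert x S) n)). PS S w)"
    unfolding Z_def eq by (subst sum.insert) (use fin in auto)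
  also have "(\<Sum>w\<in>(\<lambda>(x, w). x # w) ` (Sigma V (\<lambda>x. Wn (insert x S) n)). PS S w)
      = (\<Sum>p\<in>Sigma V (\<lambda>x. Wn (insert x S) n). PS S ((\<lambda>(x, w). x # w) p))"
    by (rule sum.reindex[OF inj, unfolded comp_def])
  also have "\<dots> = (\<Sum>x\<in>V. \<Sum>w\<in>Wn (insert x S) n. PS S (x # w))"
    by (subst sum.Sigma) (auto intro: finite_Wn simp: case_prod_beta)
  also have "\<dots> = (\<Sum>x\<in>V. pmf \<mu> x / Pm (nb (insert x S)) * Z n (insert x S))"
    unfolding Z_def by (simp add: sum_distrib_left)
  finally show ?thesis using True by simp
qed

definition ncond :: bool where
  "ncond \<longleftrightarrow> (\<forall>I\<in>indep_sets N E. Pm I < Pm (nb I))"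

lemma Z_bound:
  assumes nc: ncond
  shows "S \<subseteq> V \<Longrightarrow> \<exists>C. \<forall>n. Z n S \<le> C"
proof (induction S rule: measure_induct_rule[where f="\<lambda>S. card (V - S)"])
  case (less S)
  show ?case
  proof (cases "\<forall>a\<in>S. \<forall>b\<in>S. \<not> E a b")
    case False then show ?thesis using Z_notind by (intro exI[of _ 0]) simp
  next
    case ind: True
    have "\<forall>x\<in>V - S. \<exists>C. \<forall>n. Z n (insert x S) \<le> C"
    proof
      fix x assume x: "x \<in> V - S"
      have cl: "card (V - insert x S) < card (V - S)"
      proof -
        have e: "V - insert x S = (V - S) - {x}" by blast
        show ?thesis unfolding e by (rule card_Diff1_less) (use x in simp_all)
      qed
      have "insert x S \<subseteq> V" using x less.prems by blast
      then show "\<exists>C. \<forall>n. Z n (insert x S) \<le> C" using less.IH[OF cl] by blast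
    qed
    from bchoice[OF this] obtain Cf where Cf0: "\<forall>x\<in>V - S. \<forall>n. Z n (insert x S) \<le> Cf x" ..
    then have Cf: "\<And>x n. x \<in> V - S \<Longrightarrow> Z n (insert x S) \<le> Cf x" by blast
    define C' where "C' x = max 0 (Cf x)" for x
    have C'1: "\<And>x n. x \<in> V - S \<Longrightarrow> Z n (insert x S) \<le> C' x" using Cf unfolding C'_def by (meson max.coboundedI2)
    have C'0: "\<And>x. C' x \<ge> 0" unfolding C'_def by simp
    define c where "c x = pmf \<mu> x / Pm (nb (insert x S))" for x
    have c0: "\<And>x. c x \<ge> 0" unfolding c_def by simp
    define \<rho> where "\<rho> = (\<Sum>x\<in>S. c x)"
    have \<rho>: "0 \<le> \<rho>" "\<rho> < 1"
    proof -
      show "0 \<le> \<rho>" unfolding \<rho>_def by (rule sum_nonneg) (simp add: c0)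
      show "\<rho> < 1"
      proof (cases "S = {}")
        case True then show ?thesis by (simp add: \<rho>_def)
      next
        case False
        have SI: "S \<in> indep_sets N E" using False ind less.prems by (auto simp: indep_sets_def)
        have lt: "Pm S < Pm (nb S)" using nc SI unfolding ncond_def by blast
        have "\<rho> = (\<Sum>x\<in>S. pmf \<mu> x) / Pm (nb S)"
          unfolding \<rho>_def c_def by (simp add: sum_divide_distrib insert_absorb)
        also have "\<dots> = Pm S / Pm (nb S)" using Pm_sum[OF less.prems] by simp
        also have "\<dots> < 1" using lt by (simp add: divide_less_eq)
        finally show ?thesis .
      qed
    qed
    define Kc where "Kc = (1 + (\<Sum>x\<in>V - S. c x * C' x)) / (1 - \<rho>)"
    have num: "1 + (\<Sum>x\<in>V - S. c x * C' x) \<ge> 1"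
      using sum_nonneg[of "V - S" "\<lambda>x. c x * C' x"] c0 C'0 by auto
    have "\<forall>n. Z n S \<le> Kc"
    proof
      fix n show "Z n S \<le> Kc"
      proof (induction n)
        case 0
        have "1 \<le> Kc" unfolding Kc_def using num \<rho> by (simp add: le_divide_eq)
        then show ?case using Z_0[OF ind] by simp
      next
        case (Suc n)
        have VS: "V = S \<union> (V - S)" using less.prems by auto
        have "Z (Suc n) S = 1 + (\<Sum>x\<in>V. c x * Z n (insert x S))"
          using Z_Suc[of n S] ind unfolding c_def by simp
        also have "(\<Sum>x\<in>V. c x * Z n (insert x S)) =
            (\<Sum>x\<in>S. c x * Z n (insert x S)) + (\<Sum>x\<in>V - S. c x * Z n (insert x S))"
          by (subst VS, rule sum.union_disjoint) (use less.prems in \<open>auto intro: finite_subset\<close>)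
        also have "(\<Sum>x\<in>S. c x * Z n (insert x S)) = \<rho> * Z n S"
          unfolding \<rho>_def sum_distrib_right by (intro sum.cong) (auto simp: insert_absorb)
        also have "\<rho> * Z n S \<le> \<rho> * Kc" using Suc \<rho> by (simp add: mult_left_mono)
        also have "(\<Sum>x\<in>V - S. c x * Z n (insert x S)) \<le> (\<Sum>x\<in>V - S. c x * C' x)"
          by (intro sum_mono mult_left_mono C'1 c0)
        finally have "Z (Suc n) S \<le> 1 + (\<rho> * Kc + (\<Sum>x\<in>V - S. c x * C' x))" by simp
        also have "\<dots> = Kc"
          unfolding Kc_def using \<rho> by (simp add: field_simps)
        finally show ?case .
      qed
    qed
    then show ?thesis by blast
  qed
qed

lemma W_Wn: "w \<in> W \<Longrightarrow> length w \<le> L \<Longrightarrow> w \<in> Wn {} L"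
  by (auto simp: adm_iff Wn_def)

lemma ncond_bounded:
  assumes ncond
  shows "\<exists>B. \<forall>F. finite F \<longrightarrow> F \<subseteq> W \<longrightarrow> sum (PS {}) F \<le> B"
proof -
  obtain C where C: "\<And>n. Z n {} \<le> C" using Z_bound[OF assms, of "{}"] by auto
  show ?thesis
  proof (intro exI allI impI)
    fix F assume F: "finite F" "F \<subseteq> W"
    define L where "L = (\<Sum>w\<in>F. length w)"
    have "F \<subseteq> Wn {} L"
    proof
      fix w assume w: "w \<in> F"
      have "length w \<le> L" unfolding L_def by (rule member_le_sum) (use w F in auto)
      then show "w \<in> Wn {} L" using W_Wn w F by auto
    qed
    then have "sum (PS {}) F \<le> sum (PS {}) (Wn {} L)"
      by (intro sum_mono2 finite_Wn) (auto simp: PS_nonneg)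
    also have "\<dots> \<le> C" using C[of L] by (simp add: Z_def)
    finally show "sum (PS {}) F \<le> C" .
  qed
qed

lemma PS_const: "set u \<subseteq> I \<Longrightarrow> PS I u = prod_list (map (pmf \<mu>) u) / Pm (nb I) ^ length u"
  by (induction u) (auto simp: insert_absorb)

lemma bounded_ncond:
  assumes B: "\<And>F. finite F \<Longrightarrow> F \<subseteq> W \<Longrightarrow> sum (PS {}) F \<le> B"
  shows ncond
  unfolding ncond_def
proof (rule ccontr)
  assume "\<not> (\<forall>I\<in>indep_sets N E. Pm I < Pm (nb I))"
  then obtain I where I: "I \<in> indep_sets N E" and ge: "Pm (nb I) \<le> Pm I" by force
  have IV: "I \<subseteq> V" and Ine: "I \<noteq> {}" and Iind: "\<forall>u\<in>I. \<forall>v\<in>I. \<not> E u v"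
    using I by (auto simp: indep_sets_def)
  have finI: "finite I" using IV by (rule finite_subset) simp
  obtain i0 where i0: "i0 \<in> I" using Ine by blast
  have nbpos: "Pm (nb I) > 0" using nb_pos[of i0 I] i0 IV by auto
  define \<rho> where "\<rho> = Pm I / Pm (nb I)"
  have \<rho>1: "\<rho> \<ge> 1" unfolding \<rho>_def using ge nbpos by simp
  define p0 where "p0 = sorted_list_of_set I"
  have p0set: "set p0 = I" unfolding p0_def using finI by simp
  have PSp0: "PS {} p0 > 0" using PS_pos p0set IV by simp
  define Lu where "Lu n = {u. set u \<subseteq> I \<and> length u = n}" for n
  have finLu: "finite (Lu n)" for n unfolding Lu_def using finite_lists_length_eq[OF finI] by simp
  have sumLu: "(\<Sum>u\<in>Lu n. PS I u) = \<rho> ^ n" for n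
  proof -
    have "(\<Sum>u\<in>Lu n. PS I u) = (\<Sum>u\<in>Lu n. prod_list (map (pmf \<mu>) u)) / Pm (nb I) ^ n"
      unfolding sum_divide_distrib by (intro sum.cong refl) (auto simp: Lu_def PS_const)
    also have "\<dots> = (sum (pmf \<mu>) I) ^ n / Pm (nb I) ^ n"
      unfolding Lu_def by (subst sum_lists_prod[OF finI]) simp
    also have "\<dots> = \<rho> ^ n" unfolding \<rho>_def using Pm_sum[OF IV] by (simp add: power_divide)
    finally show ?thesis .
  qed
  obtain M :: nat where M: "real M > B / PS {} p0" using reals_Archimedean2 by blast
  define G where "G = (\<Union>n\<le>M. Lu n)"
  have finG: "finite G" unfolding G_def using finLu by auto
  have sumG: "(\<Sum>u\<in>G. PS I u) = (\<Sum>n\<le>M. \<rho> ^ n)"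
    unfolding G_def by (subst sum.UNION_disjoint) (simp_all add: finLu sumLu, auto simp: Lu_def)
  have "(\<Sum>n\<le>M. (1::real)) \<le> (\<Sum>n\<le>M. \<rho> ^ n)"
    by (intro sum_mono) (use \<rho>1 one_le_power in auto)
  then have sumG_ge: "(\<Sum>u\<in>G. PS I u) \<ge> real M + 1" using sumG by simp
  define F where "F = (\<lambda>u. p0 @ u) ` G"
  have FW: "F \<subseteq> W"
  proof
    fix w assume "w \<in> F"
    then obtain u where u: "w = p0 @ u" "set u \<subseteq> I" by (auto simp: F_def G_def Lu_def)
    then have wI: "set w \<subseteq> I" using p0set by auto
    show "w \<in> W" unfolding adm_iff using wI IV Iind by blast
  qed
  have finF: "finite F" unfolding F_def using finG by simp
  have "sum (PS {}) F = (\<Sum>u\<in>G. PS {} (p0 @ u))"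
    unfolding F_def by (rule sum.reindex[unfolded comp_def]) (simp add: inj_on_def)
  also have "\<dots> = PS {} p0 * (\<Sum>u\<in>G. PS I u)"
    unfolding sum_distrib_left using p0set by (simp add: PS_append)
  finally have "sum (PS {}) F = PS {} p0 * (\<Sum>u\<in>G. PS I u)" .
  moreover have "PS {} p0 * (\<Sum>u\<in>G. PS I u) \<ge> PS {} p0 * (real M + 1)"
    using sumG_ge PSp0 by (simp add: mult_left_mono)
  moreover have "PS {} p0 * (real M + 1) > B"
    using M PSp0 by (simp add: divide_less_eq algebra_simps)
  ultimately have "sum (PS {}) F > B" by linarith
  then show False using B[OF finF FW] by linarith
qed

end



lemma pr_iff:
  fixes m f :: "nat \<Rightarrow> real"
  assumes m0: "m 0 = 1" and mstep: "\<And>n. m n = m (Suc n) + f (Suc n)"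
    and mnn: "\<And>n. m n \<ge> 0" and fnn: "\<And>n. f (Suc n) \<ge> 0"
  shows "((\<lambda>n. f (Suc n)) sums 1 \<and> summable (\<lambda>n. real (Suc n) * f (Suc n))) \<longleftrightarrow> summable m"
proof -
  have P1: "(\<Sum>n<M. f (Suc n)) = 1 - m M" for M
  proof (induction M)
    case 0 then show ?case using m0 by simp
  next
    case (Suc M)
    have "f (Suc M) = m M - m (Suc M)" using mstep[of M] by simp
    then show ?case using Suc by simp
  qed
  have P2: "(\<Sum>n<M. real (Suc n) * f (Suc n)) = (\<Sum>n<M. m n) - real M * m M" for M
  proof (induction M)
    case 0 then show ?case by simp
  next
    case (Suc M)
    have "f (Suc M) = m M - m (Suc M)" using mstep[of M] by simp
    then have e: "real (Suc M) * f (Suc M) = real (Suc M) * m M - real (Suc M) * m (Suc M)"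
      by (simp add: right_diff_distrib)
    show ?case unfolding sum.lessThan_Suc Suc.IH e by (simp add: algebra_simps)
  qed
  define g where "g n = real (Suc n) * f (Suc n)" for n
  have gnn: "g n \<ge> 0" for n unfolding g_def using fnn by simp
  show ?thesis
  proof
    assume h: "(\<lambda>n. f (Suc n)) sums 1 \<and> summable (\<lambda>n. real (Suc n) * f (Suc n))"
    then have fs: "(\<lambda>n. f (Suc n)) sums 1" and gs: "summable g" unfolding g_def by auto
    have fsum: "summable (\<lambda>n. f (Suc n))" using fs by (auto simp: sums_iff)
    have mM: "m M = (\<Sum>k. f (Suc (k + M)))" for M
    proof -
      have "(\<Sum>n. f (Suc n)) = (\<Sum>k. f (Suc (k + M))) + (\<Sum>n<M. f (Suc n))"
        using suminf_split_initial_segment[OF fsum, of M] by simp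
      then show ?thesis using P1[of M] fs by (simp add: sums_iff)
    qed
    have bound: "real M * m M \<le> suminf g" for M
    proof -
      have s1: "summable (\<lambda>k. f (Suc (k + M)))"
        using summable_ignore_initial_segment[OF fsum, of M] by simp
      have s2: "summable (\<lambda>k. g (k + M))" using summable_ignore_initial_segment[OF gs, of M] .
      have "real M * m M = (\<Sum>k. real M * f (Suc (k + M)))"
        unfolding mM using suminf_mult[OF s1, of "real M"] by simp
      also have "\<dots> \<le> (\<Sum>k. g (k + M))"
        by (rule suminf_le) (use s1 s2 fnn in \<open>auto simp: g_def intro!: mult_right_mono summable_mult\<close>)
      also have "\<dots> \<le> suminf g"
        using suminf_split_initial_segment[OF gs, of M] sum_nonneg[of "{..<M}" g] gnn by simp
      finally show ?thesis .
    qed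
    show "summable m"
    proof (rule bounded_imp_summable[where B="2 * suminf g"])
      fix n show "0 \<le> m n" by (rule mnn)
    next
      fix n
      have "sum m {..n} = (\<Sum>k<Suc n. g k) + real (Suc n) * m (Suc n)"
        using P2[of "Suc n"] unfolding g_def by (simp add: lessThan_Suc_atMost)
      also have "(\<Sum>k<Suc n. g k) \<le> suminf g" using sum_le_suminf[OF gs, of "{..<Suc n}"] gnn by auto
      also have "real (Suc n) * m (Suc n) \<le> suminf g" by (rule bound)
      finally show "sum m {..n} \<le> 2 * suminf g" by simp
    qed
  next
    assume ms: "summable m"
    have m0l: "m \<longlonglongrightarrow> 0" by (rule summable_LIMSEQ_zero[OF ms])
    have "(\<lambda>M. \<Sum>n<M. f (Suc n)) \<longlonglongrightarrow> 1 - 0"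
      unfolding P1 by (intro tendsto_diff tendsto_const m0l)
    then have fs: "(\<lambda>n. f (Suc n)) sums 1" by (simp add: sums_def)
    have "summable g"
    proof (rule bounded_imp_summable[where B="suminf m"])
      fix n show "0 \<le> g n" by (rule gnn)
    next
      fix n
      have "sum g {..n} = (\<Sum>k<Suc n. m k) - real (Suc n) * m (Suc n)"
        using P2[of "Suc n"] unfolding g_def by (simp add: lessThan_Suc_atMost)
      also have "\<dots> \<le> (\<Sum>k<Suc n. m k)" using mnn[of "Suc n"] by simp
      also have "\<dots> \<le> suminf m" using sum_le_suminf[OF ms, of "{..<Suc n}"] mnn by auto
      finally show "sum g {..n} \<le> suminf m" .
    qed
    then show "(\<lambda>n. f (Suc n)) sums 1 \<and> summable (\<lambda>n. real (Suc n) * f (Suc n))"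
      using fs unfolding g_def by simp
  qed
qed




context fcfm begin

definition Vn :: "nat \<Rightarrow> nat list set" where
  "Vn n = {vs. length vs = n \<and> set vs \<subseteq> V}"
definition pr :: "nat list \<Rightarrow> real" where
  "pr vs = prod_list (map (pmf \<mu>) vs)"
abbreviation "qa vs \<equiv> queue_after E vs"
definition avoid :: "nat list \<Rightarrow> bool" where
  "avoid vs \<longleftrightarrow> (\<forall>k. 0 < k \<and> k \<le> length vs \<longrightarrow> qa (take k vs) \<noteq> [])"
definition nu :: "nat \<Rightarrow> nat list \<Rightarrow> real" where
  "nu n y = (\<Sum>vs\<in>Vn n. if qa vs = y \<and> avoid vs then pr vs else 0)"
definition mass :: "nat \<Rightarrow> real" where
  "mass n = (\<Sum>vs\<in>Vn n. if avoid vs then pr vs else 0)"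
definition R :: "nat \<Rightarrow> nat list \<Rightarrow> real" where
  "R n y = (\<Sum>vs\<in>Vn n. \<Sum>v\<in>V. if avoid vs \<and> fcfm_step E (qa vs) v = y then pr vs * pmf \<mu> v else 0)"

lemma finite_Vn: "finite (Vn n)"
  unfolding Vn_def using finite_lists_length_eq[of V n] by (simp add: conj_commute)

lemma Vn_0: "Vn 0 = {[]}" by (auto simp: Vn_def)

lemma Vn_Suc: "Vn (Suc n) = (\<lambda>(vs, v). vs @ [v]) ` (Vn n \<times> V)"
proof (intro equalityI subsetI)
  fix ws assume ws: "ws \<in> Vn (Suc n)"
  then have ne: "ws \<noteq> []" by (auto simp: Vn_def)
  have "ws = butlast ws @ [last ws]" using ne by simp
  moreover have "butlast ws \<in> Vn n" using ws by (auto simp: Vn_def dest: in_set_butlastD)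
  moreover have "last ws \<in> V" using ws ne last_in_set unfolding Vn_def by blast
  ultimately show "ws \<in> (\<lambda>(vs, v). vs @ [v]) ` (Vn n \<times> V)" by force
next
  fix ws assume "ws \<in> (\<lambda>(vs, v). vs @ [v]) ` (Vn n \<times> V)"
  then obtain vs v where "ws = vs @ [v]" "vs \<in> Vn n" "v \<in> V" by auto
  then show "ws \<in> Vn (Suc n)" unfolding Vn_def by simp
qed

lemma sum_Vn_Suc: "(\<Sum>ws\<in>Vn (Suc n). h ws) = (\<Sum>vs\<in>Vn n. \<Sum>v\<in>V. h (vs @ [v]))"
proof -
  have inj: "inj_on (\<lambda>(vs, v). vs @ [v]) (Vn n \<times> V)" by (auto simp: inj_on_def)
  show ?thesis unfolding Vn_Suc
    by (subst sum.reindex[OF inj]) (simp add: sum.cartesian_product case_prod_beta)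
qed

lemma pr_snoc: "pr (vs @ [v]) = pr vs * pmf \<mu> v" by (simp add: pr_def)
lemma pr_nonneg: "pr vs \<ge> 0" unfolding pr_def by (induction vs) auto

lemma qa_nil: "qa [] = []" by (simp add: queue_after_def)

lemma qa_W: "set vs \<subseteq> V \<Longrightarrow> qa vs \<in> W"
proof (induction vs rule: rev_induct)
  case Nil then show ?case by (simp add: qa_nil adm_iff)
next
  case (snoc x xs) then show ?case by (simp add: qa_snoc step_W)
qed

lemma avoid_snoc: "avoid (vs @ [v]) \<longleftrightarrow> avoid vs \<and> qa (vs @ [v]) \<noteq> []"
proof -
  have t: "take k (vs @ [v]) = take k vs" if "k \<le> length vs" for k using that by simp
  show ?thesis unfolding avoid_def
  proof (intro iffI conjI allI impI)
    fix k assume h: "\<forall>k. 0 < k \<and> k \<le> length (vs @ [v]) \<longrightarrow> qa (take k (vs @ [v])) \<noteq> []"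
      and k: "0 < k \<and> k \<le> length vs"
    then show "qa (take k vs) \<noteq> []" using h[rule_format, of k] t[of k] by simp
  next
    assume h: "\<forall>k. 0 < k \<and> k \<le> length (vs @ [v]) \<longrightarrow> qa (take k (vs @ [v])) \<noteq> []"
    then show "qa (vs @ [v]) \<noteq> []" using h[rule_format, of "Suc (length vs)"] by simp
  next
    fix k assume h: "(\<forall>k. 0 < k \<and> k \<le> length vs \<longrightarrow> qa (take k vs) \<noteq> []) \<and> qa (vs @ [v]) \<noteq> []"
      and k: "0 < k \<and> k \<le> length (vs @ [v])"
    show "qa (take k (vs @ [v])) \<noteq> []"
    proof (cases "k \<le> length vs")
      case True then show ?thesis using h k t[of k] by simp
    next
      case False then have "k = Suc (length vs)" using k by simp
      then show ?thesis using h by simp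
    qed
  qed
qed

lemma avoid_nil: "avoid []" by (simp add: avoid_def)

lemma nu_nonneg: "nu n y \<ge> 0" unfolding nu_def by (rule sum_nonneg) (simp add: pr_nonneg)
lemma mass_nonneg: "mass n \<ge> 0" unfolding mass_def by (rule sum_nonneg) (simp add: pr_nonneg)
lemma R_nonneg: "R n y \<ge> 0" unfolding R_def by (intro sum_nonneg) (simp add: pr_nonneg)

lemma nu_0: "nu 0 y = (if y = [] then 1 else 0)"
  by (simp add: nu_def Vn_0 qa_nil avoid_nil pr_def)

lemma mass_0: "mass 0 = 1"
  by (simp add: mass_def Vn_0 avoid_nil pr_def)

lemma nu_Suc: "nu (Suc n) y = (if y = [] then 0 else R n y)"
proof (cases "y = []")
  case True show ?thesis unfolding nu_def sum_Vn_Suc avoid_snoc qa_snoc True by (auto intro!: sum.neutral)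
next
  case False show ?thesis unfolding nu_def R_def sum_Vn_Suc avoid_snoc qa_snoc pr_snoc
    using False by (auto intro!: sum.cong)
qed

lemma fr_Suc: "first_return_prob N E \<mu> (Suc n) = R n []"
proof -
  have "first_return_prob N E \<mu> (Suc n) = (\<Sum>ws\<in>Vn (Suc n).
        if qa ws = [] \<and> (\<forall>k. 0 < k \<and> k < Suc n \<longrightarrow> qa (take k ws) \<noteq> []) then pr ws else 0)"
    unfolding first_return_prob_def Vn_def pr_def by simp
  also have "\<dots> = R n []"
    unfolding sum_Vn_Suc R_def
  proof (intro sum.cong refl)
    fix vs v assume vs: "vs \<in> Vn n"
    have l: "length vs = n" using vs by (simp add: Vn_def)
    have "(\<forall>k. 0 < k \<and> k < Suc n \<longrightarrow> qa (take k (vs @ [v])) \<noteq> []) \<longleftrightarrow> avoid vs"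
      unfolding avoid_def using l by auto
    then show "(if qa (vs @ [v]) = [] \<and> (\<forall>k. 0 < k \<and> k < Suc n \<longrightarrow> qa (take k (vs @ [v])) \<noteq> [])
              then pr (vs @ [v]) else 0) =
          (if avoid vs \<and> fcfm_step E (qa vs) v = [] then pr vs * pmf \<mu> v else 0)"
      by (simp add: qa_snoc pr_snoc conj_commute)
  qed
  finally show ?thesis .
qed

lemma mass_Suc: "mass n = mass (Suc n) + R n []"
proof -
  have "mass (Suc n) + R n [] = (\<Sum>vs\<in>Vn n. \<Sum>v\<in>V. if avoid vs then pr vs * pmf \<mu> v else 0)"
    unfolding mass_def R_def sum_Vn_Suc avoid_snoc qa_snoc pr_snoc
    by (simp add: sum.distrib[symmetric]) (auto intro!: sum.cong)
  also have "\<dots> = (\<Sum>vs\<in>Vn n. if avoid vs then pr vs * (\<Sum>v\<in>V. pmf \<mu> v) else 0)"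
    by (intro sum.cong refl) (simp add: sum_distrib_left)
  also have "\<dots> = mass n" by (simp only: sumV mult_1_right mass_def)
  finally show ?thesis by simp
qed

lemma sum_delta_cond: "finite Y \<Longrightarrow> (\<Sum>y\<in>Y. if a = y \<and> P then c else 0) = (if a \<in> Y \<and> P then c else 0)"
  by (cases P) (simp_all add: sum.delta)

lemma R_Q: assumes yW: "y \<in> W" shows "R n y = (\<Sum>x\<in>Q y. nu n x * K x y)"
proof -
  have "(\<Sum>x\<in>Q y. nu n x * K x y) = (\<Sum>x\<in>Q y. \<Sum>vs\<in>Vn n.
          (if qa vs = x \<and> avoid vs then pr vs * K (qa vs) y else 0))"
    unfolding nu_def sum_distrib_right by (intro sum.cong refl) auto
  also have "\<dots> = (\<Sum>vs\<in>Vn n. \<Sum>x\<in>Q y. (if qa vs = x \<and> avoid vs then pr vs * K (qa vs) y else 0))"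
    by (rule sum.swap)
  also have "\<dots> = (\<Sum>vs\<in>Vn n. if qa vs \<in> Q y \<and> avoid vs then pr vs * K (qa vs) y else 0)"
    by (intro sum.cong refl) (simp add: sum_delta_cond finite_Q)
  also have "\<dots> = (\<Sum>vs\<in>Vn n. if avoid vs then pr vs * K (qa vs) y else 0)"
  proof (intro sum.cong refl)
    fix vs assume vs: "vs \<in> Vn n"
    have "qa vs \<in> W" using vs qa_W by (simp add: Vn_def)
    then have "qa vs \<notin> Q y \<Longrightarrow> K (qa vs) y = 0" by (rule K_zero)
    then show "(if qa vs \<in> Q y \<and> avoid vs then pr vs * K (qa vs) y else 0) =
               (if avoid vs then pr vs * K (qa vs) y else 0)" by auto
  qed
  also have "\<dots> = R n y"
    unfolding R_def K_def' sum_distrib_left by (auto intro!: sum.cong)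
  finally show ?thesis by simp
qed

lemma sum_nu: "finite Y \<Longrightarrow> (\<Sum>y\<in>Y. nu n y) = (\<Sum>vs\<in>Vn n. if qa vs \<in> Y \<and> avoid vs then pr vs else 0)"
  unfolding nu_def by (subst sum.swap) (simp add: sum_delta_cond)

lemma sum_nu_le: "finite Y \<Longrightarrow> (\<Sum>y\<in>Y. nu n y) \<le> mass n"
  unfolding sum_nu mass_def by (intro sum_mono) (simp add: pr_nonneg)

lemma nu_le: "nu n y \<le> mass n"
  using sum_nu_le[of "{y}" n] by simp

definition YM :: "nat \<Rightarrow> nat list set" where "YM M = {y \<in> W. length y \<le> M}"

lemma sum_nu_YM: "n \<le> M \<Longrightarrow> (\<Sum>y\<in>YM M. nu n y) = mass n"
  unfolding sum_nu[OF finite_Wlen[of M, folded YM_def]] mass_def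
proof (intro sum.cong refl)
  fix vs assume "n \<le> M" "vs \<in> Vn n"
  then have "qa vs \<in> YM M" using qa_W qa_length[of E vs] unfolding YM_def Vn_def by auto
  then show "(if qa vs \<in> YM M \<and> avoid vs then pr vs else 0) = (if avoid vs then pr vs else 0)" by simp
qed

definition invar :: "(nat list \<Rightarrow> real) \<Rightarrow> bool" where
  "invar q \<longleftrightarrow> (\<forall>y\<in>W. q y = (\<Sum>x\<in>Q y. q x * K x y))"

lemma kac:
  assumes nn: "\<And>y. y \<in> W \<Longrightarrow> lam y \<ge> 0" and l0: "lam [] = 1" and inv: "invar lam"
  shows "y \<in> W \<Longrightarrow> (\<Sum>n\<le>M. nu n y) \<le> lam y"
proof (induction M arbitrary: y)
  case 0 then show ?case using nn[of y] l0 by (simp add: nu_0)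
next
  case (Suc M)
  have "(\<Sum>n\<le>Suc M. nu n y) = nu 0 y + (\<Sum>n\<le>M. nu (Suc n) y)"
    by (simp add: sum.atMost_Suc_shift del: sum.atMost_Suc)
  also have "\<dots> \<le> lam y"
  proof (cases "y = []")
    case True then show ?thesis using l0 by (simp add: nu_0 nu_Suc)
  next
    case False
    have "nu 0 y + (\<Sum>n\<le>M. nu (Suc n) y) = (\<Sum>n\<le>M. \<Sum>x\<in>Q y. nu n x * K x y)"
      using False by (simp add: nu_0 nu_Suc R_Q[OF Suc.prems])
    also have "\<dots> = (\<Sum>x\<in>Q y. (\<Sum>n\<le>M. nu n x) * K x y)"
      by (subst sum.swap) (simp add: sum_distrib_right)
    also have "\<dots> \<le> (\<Sum>x\<in>Q y. lam x * K x y)"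
      by (intro sum_mono mult_right_mono K_nonneg Suc.IH) (simp add: Q_def)
    also have "\<dots> = lam y" using inv Suc.prems unfolding invar_def by simp
    finally show ?thesis .
  qed
  finally show ?case .
qed

lemma kac_mass:
  assumes nn: "\<And>y. y \<in> W \<Longrightarrow> lam y \<ge> 0" and l0: "lam [] = 1" and inv: "invar lam"
  shows "(\<Sum>n\<le>M. mass n) \<le> (\<Sum>y\<in>YM M. lam y)"
proof -
  have "(\<Sum>n\<le>M. mass n) = (\<Sum>n\<le>M. \<Sum>y\<in>YM M. nu n y)"
    by (intro sum.cong refl) (simp add: sum_nu_YM)
  also have "\<dots> = (\<Sum>y\<in>YM M. \<Sum>n\<le>M. nu n y)" by (rule sum.swap)
  also have "\<dots> \<le> (\<Sum>y\<in>YM M. lam y)"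
    by (intro sum_mono kac[OF nn l0 inv]) (auto simp: YM_def)
  finally show ?thesis .
qed

lemma zero_prop:
  assumes nn: "\<And>y. y \<in> W \<Longrightarrow> q y \<ge> 0" and q0: "q [] = 0" and inv: "invar q"
  shows "x \<in> W \<Longrightarrow> q x = 0"
proof (induction x)
  case Nil then show ?case using q0 by simp
next
  case (Cons a x)
  have xW: "x \<in> W" using Cons.prems by (simp add: adm_iff)
  have qx: "q x = 0" using Cons.IH[OF xW] .
  have mem: "a # x \<in> Q x" using Cons.prems by (simp add: Q_def)
  have "q (a # x) * K (a # x) x \<le> (\<Sum>z\<in>Q x. q z * K z x)"
    by (rule member_le_sum[OF mem _ finite_Q]) (use nn K_nonneg in \<open>auto simp: Q_def\<close>)
  also have "\<dots> = 0" using inv xW qx unfolding invar_def by simp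
  finally have "q (a # x) * K (a # x) x \<le> 0" .
  moreover have "K (a # x) x > 0" by (rule K_pos_remove[OF Cons.prems])
  moreover have "q (a # x) \<ge> 0" using nn Cons.prems .
  ultimately show ?case by (simp add: mult_le_0_iff)
qed

lemma PR_iff: "positive_recurrent N E \<mu> \<longleftrightarrow> summable mass"
  unfolding positive_recurrent_def
proof (rule pr_iff)
  show "mass 0 = 1" by (rule mass_0)
next
  fix n show "mass n = mass (Suc n) + first_return_prob N E \<mu> (Suc n)"
    using mass_Suc[of n] fr_Suc[of n] by simp
next
  fix n show "0 \<le> mass n" by (rule mass_nonneg)
next
  fix n show "0 \<le> first_return_prob N E \<mu> (Suc n)" using fr_Suc[of n] R_nonneg by simp
qed

end



context fcfm begin

definition mm :: "nat list \<Rightarrow> real" where "mm y = (\<Sum>n. nu n y)"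

lemma nu_summable: "summable mass \<Longrightarrow> summable (\<lambda>n. nu n y)"
  by (rule summable_comparison_test'[where g=mass and N=0]) (simp_all add: nu_nonneg nu_le)

lemma mm_nil: assumes "summable mass" shows "mm [] = 1"
proof -
  have "(\<Sum>n. nu (Suc n) []) = mm [] - nu 0 []"
    unfolding mm_def by (rule suminf_split_head[OF nu_summable[OF assms]])
  then show ?thesis by (simp add: nu_Suc nu_0)
qed

lemma mm_le:
  assumes ms: "summable mass" and nn: "\<And>y. y \<in> W \<Longrightarrow> lam y \<ge> 0" and l0: "lam [] = 1" and inv: "invar lam"
    and yW: "y \<in> W"
  shows "mm y \<le> lam y"
  unfolding mm_def
proof (rule suminf_le_const[OF nu_summable[OF ms]])
  fix n
  have "(\<Sum>k<n. nu k y) \<le> (\<Sum>k\<le>n. nu k y)"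
    by (rule sum_mono2) (auto simp: nu_nonneg)
  also have "\<dots> \<le> lam y" by (rule kac[OF nn l0 inv yW])
  finally show "(\<Sum>k<n. nu k y) \<le> lam y" .
qed

lemma mm_inv: assumes ms: "summable mass" shows "invar mm"
  unfolding invar_def
proof
  fix y assume yW: "y \<in> W"
  have fs: "(\<lambda>n. R n []) sums 1"
    using PR_iff ms unfolding positive_recurrent_def by (simp add: fr_Suc)
  have "(\<Sum>x\<in>Q y. mm x * K x y) = (\<Sum>x\<in>Q y. \<Sum>n. nu n x * K x y)"
    unfolding mm_def by (intro sum.cong refl suminf_mult2 nu_summable[OF ms])
  also have "\<dots> = (\<Sum>n. \<Sum>x\<in>Q y. nu n x * K x y)"
    by (rule suminf_sum[symmetric]) (intro summable_mult2 nu_summable[OF ms])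
  also have "\<dots> = (\<Sum>n. R n y)" by (simp add: R_Q[OF yW])
  also have "\<dots> = mm y"
  proof (cases "y = []")
    case True then show ?thesis using fs mm_nil[OF ms] by (simp add: sums_iff)
  next
    case False
    have "(\<Sum>n. nu (Suc n) y) = mm y - nu 0 y"
      unfolding mm_def by (rule suminf_split_head[OF nu_summable[OF ms]])
    then show ?thesis using False by (simp add: nu_Suc nu_0)
  qed
  finally show "mm y = (\<Sum>x\<in>Q y. mm x * K x y)" by simp
qed

lemma unique_inv:
  assumes ms: "summable mass" and nn: "\<And>y. y \<in> W \<Longrightarrow> lam y \<ge> 0" and l0: "lam [] = 1" and inv: "invar lam"
    and yW: "y \<in> W"
  shows "lam y = mm y"
proof -
  define d where "d y = lam y - mm y" for y
  have dnn: "\<And>y. y \<in> W \<Longrightarrow> d y \<ge> 0" unfolding d_def using mm_le[OF ms nn l0 inv] by simp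
  have d0: "d [] = 0" unfolding d_def using l0 mm_nil[OF ms] by simp
  have dinv: "invar d"
    unfolding invar_def
  proof
    fix y assume y: "y \<in> W"
    have "(\<Sum>x\<in>Q y. d x * K x y) = (\<Sum>x\<in>Q y. lam x * K x y) - (\<Sum>x\<in>Q y. mm x * K x y)"
      unfolding d_def by (simp add: left_diff_distrib sum_subtractf)
    also have "\<dots> = d y" using inv mm_inv[OF ms] y unfolding invar_def d_def by simp
    finally show "d y = (\<Sum>x\<in>Q y. d x * K x y)" by simp
  qed
  have "d y = 0" by (rule zero_prop[OF dnn d0 dinv yW])
  then show ?thesis unfolding d_def by simp
qed

lemma PS_invar: "invar (PS {})"
  unfolding invar_def using balance by simp

lemma PS_eq_mm: "summable mass \<Longrightarrow> y \<in> W \<Longrightarrow> PS {} y = mm y"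
  by (rule unique_inv) (simp_all add: PS_nonneg PS_invar)

lemma summable_ncond: assumes ms: "summable mass" shows ncond
proof (rule bounded_ncond)
  fix F assume F: "finite F" "F \<subseteq> W"
  have "sum (PS {}) F = (\<Sum>y\<in>F. \<Sum>n. nu n y)"
    using F PS_eq_mm[OF ms] unfolding mm_def by (intro sum.cong) auto
  also have "\<dots> = (\<Sum>n. \<Sum>y\<in>F. nu n y)"
    by (rule suminf_sum[symmetric]) (rule nu_summable[OF ms])
  also have "\<dots> \<le> suminf mass"
    by (rule suminf_le) (use F ms in \<open>auto intro: sum_nu_le summable_sum nu_summable\<close>)
  finally show "sum (PS {}) F \<le> suminf mass" .
qed

lemma ncond_summable: assumes nc: ncond shows "summable mass"
proof -
  obtain B where B: "\<And>F. finite F \<Longrightarrow> F \<subseteq> W \<Longrightarrow> sum (PS {}) F \<le> B"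
    using ncond_bounded[OF nc] by blast
  show ?thesis
  proof (rule bounded_imp_summable[where B=B])
    fix n show "0 \<le> mass n" by (rule mass_nonneg)
  next
    fix M
    have "sum mass {..M} \<le> (\<Sum>y\<in>YM M. PS {} y)"
      by (rule kac_mass) (simp_all add: PS_nonneg PS_invar)
    also have "\<dots> \<le> B" by (rule B) (auto simp: YM_def finite_Wlen)
    finally show "sum mass {..M} \<le> B" .
  qed
qed

lemma Ncond_iff: "\<mu> \<in> Ncond N E \<longleftrightarrow> ncond"
  unfolding Ncond_def ncond_def using supp by simp

lemma hs_iff: "y \<in> W \<Longrightarrow> ((\<lambda>w. p w * K w y) has_sum s) W \<longleftrightarrow> s = (\<Sum>x\<in>Q y. p x * K x y)"
proof -
  assume y: "y \<in> W"
  have "((\<lambda>w. p w * K w y) has_sum s) W \<longleftrightarrow> ((\<lambda>w. p w * K w y) has_sum s) (Q y)"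
    by (rule has_sum_cong_neutral) (auto simp: Q_def K_zero)
  also have "\<dots> \<longleftrightarrow> s = (\<Sum>x\<in>Q y. p x * K x y)" by (rule has_sum_finite_iff[OF finite_Q])
  finally show ?thesis .
qed

lemma main_loc:
  shows "(positive_recurrent N E \<mu> \<longleftrightarrow> \<mu> \<in> Ncond N E) \<and>
         (\<mu> \<in> Ncond N E \<longrightarrow>
            (\<exists>\<alpha>>0. stationary_prob N E \<mu> (Pi_W N E \<mu> \<alpha>) \<and>
               (\<forall>p. stationary_prob N E \<mu> p \<longrightarrow>
                    (\<forall>w \<in> admissible_words N E. p w = Pi_W N E \<mu> \<alpha> w))))"
proof (intro conjI impI)
  show "positive_recurrent N E \<mu> \<longleftrightarrow> \<mu> \<in> Ncond N E"
    unfolding PR_iff Ncond_iff using summable_ncond ncond_summable by blast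
next
  assume "\<mu> \<in> Ncond N E"
  then have nc: ncond by (simp add: Ncond_iff)
  have ms: "summable mass" by (rule ncond_summable[OF nc])
  obtain B where B: "\<And>F. finite F \<Longrightarrow> F \<subseteq> W \<Longrightarrow> sum (PS {}) F \<le> B"
    using ncond_bounded[OF nc] by blast
  have sumW: "PS {} summable_on W"
    by (rule nonneg_bounded_partial_sums_imp_summable_on[where C=B])
      (auto simp: PS_nonneg intro!: eventually_finite_subsets_at_top_weakI B)
  define s where "s = infsum (PS {}) W"
  have hsW: "(PS {} has_sum s) W" unfolding s_def by (rule has_sum_infsum[OF sumW])
  have nilW: "[] \<in> W" by (simp add: adm_iff)
  have "sum (PS {}) {[]} \<le> s"
    unfolding s_def by (rule finite_sum_le_infsum[OF sumW]) (use nilW in \<open>auto simp: PS_nonneg\<close>)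
  then have s1: "s \<ge> 1" by simp
  define \<alpha> where "\<alpha> = 1 / s"
  have \<alpha>pos: "\<alpha> > 0" unfolding \<alpha>_def using s1 by simp
  have PiW: "Pi_W N E \<mu> \<alpha> = (\<lambda>w. \<alpha> * PS {} w)" by (rule ext) (rule Pi_W_PS)
  have stat: "stationary_prob N E \<mu> (Pi_W N E \<mu> \<alpha>)"
    unfolding stationary_prob_def PiW
  proof (intro conjI ballI)
    fix w show "0 \<le> \<alpha> * PS {} w" using \<alpha>pos PS_nonneg by simp
  next
    have "((\<lambda>w. \<alpha> * PS {} w) has_sum \<alpha> * s) W" by (rule has_sum_cmult_right[OF hsW])
    then show "((\<lambda>w. \<alpha> * PS {} w) has_sum 1) W" unfolding \<alpha>_def using s1 by simp
  next
    fix y assume y: "y \<in> W"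
    have "(\<Sum>x\<in>Q y. \<alpha> * PS {} x * K x y) = \<alpha> * (\<Sum>x\<in>Q y. PS {} x * K x y)"
      by (simp add: sum_distrib_left mult.assoc)
    also have "\<dots> = \<alpha> * PS {} y" using balance[OF y] by simp
    finally show "((\<lambda>w. \<alpha> * PS {} w * K w y) has_sum \<alpha> * PS {} y) W"
      unfolding hs_iff[OF y] by simp
  qed
  have uniq: "\<forall>p. stationary_prob N E \<mu> p \<longrightarrow> (\<forall>w\<in>W. p w = Pi_W N E \<mu> \<alpha> w)"
  proof (intro allI impI)
    fix p assume sp: "stationary_prob N E \<mu> p"
    have pnn: "\<And>y. y \<in> W \<Longrightarrow> p y \<ge> 0" and p1: "(p has_sum 1) W"
      and pinv0: "\<forall>y\<in>W. ((\<lambda>w. p w * K w y) has_sum p y) W"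
      using sp unfolding stationary_prob_def by auto
    have pinv: "invar p" unfolding invar_def using pinv0 hs_iff by blast
    have ppos: "p [] > 0"
    proof (rule ccontr)
      assume "\<not> p [] > 0"
      then have "p [] = 0" using pnn[OF nilW] by simp
      then have "\<And>y. y \<in> W \<Longrightarrow> p y = 0" using zero_prop[OF pnn _ pinv] by blast
      then have "(p has_sum 0) W" by (rule has_sum_0)
      then have "(1::real) = 0" by (rule has_sum_unique[OF p1])
      then show False by simp
    qed
    define lam where "lam y = p y / p []" for y
    have lnn: "\<And>y. y \<in> W \<Longrightarrow> lam y \<ge> 0" unfolding lam_def using pnn ppos by simp
    have l0: "lam [] = 1" unfolding lam_def using ppos by simp
    have linv: "invar lam"
      unfolding invar_def
    proof
      fix y assume y: "y \<in> W"
      have "(\<Sum>x\<in>Q y. lam x * K x y) = (\<Sum>x\<in>Q y. p x * K x y) / p []"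
        unfolding lam_def sum_divide_distrib by (simp add: field_simps)
      also have "\<dots> = lam y" using pinv y unfolding invar_def lam_def by simp
      finally show "lam y = (\<Sum>x\<in>Q y. lam x * K x y)" by simp
    qed
    have peq: "\<And>w. w \<in> W \<Longrightarrow> p w = p [] * PS {} w"
    proof -
      fix w assume w: "w \<in> W"
      have "lam w = mm w" by (rule unique_inv[OF ms lnn l0 linv w])
      moreover have "PS {} w = mm w" by (rule PS_eq_mm[OF ms w])
      ultimately show "p w = p [] * PS {} w" unfolding lam_def using ppos by (simp add: field_simps)
    qed
    have "((\<lambda>w. p [] * PS {} w) has_sum 1) W"
      using p1 peq by (subst has_sum_cong[symmetric]) auto
    moreover have "((\<lambda>w. p [] * PS {} w) has_sum p [] * s) W" by (rule has_sum_cmult_right[OF hsW])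
    ultimately have "p [] * s = 1" using has_sum_unique by blast
    then have "p [] = \<alpha>" unfolding \<alpha>_def using s1 by (simp add: field_simps)
    then show "\<forall>w\<in>W. p w = Pi_W N E \<mu> \<alpha> w" using peq PiW by simp
  qed
  show "\<exists>\<alpha>>0. stationary_prob N E \<mu> (Pi_W N E \<mu> \<alpha>) \<and>
               (\<forall>p. stationary_prob N E \<mu> p \<longrightarrow>
                    (\<forall>w \<in> admissible_words N E. p w = Pi_W N E \<mu> \<alpha> w))"
    using \<alpha>pos stat uniq by blast
qed

end

theorem theorem1:
  fixes N :: nat and E :: "nat \<Rightarrow> nat \<Rightarrow> bool" and \<mu> :: "nat pmf"
  assumes "simple_graph N E"
    and "connected_graph N E"
    and "\<not> bipartite N E"
    and "set_pmf \<mu> = {1..N}"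
  shows "(positive_recurrent N E \<mu> \<longleftrightarrow> \<mu> \<in> Ncond N E) \<and>
         (\<mu> \<in> Ncond N E \<longrightarrow>
            (\<exists>\<alpha>>0. stationary_prob N E \<mu> (Pi_W N E \<mu> \<alpha>) \<and>
               (\<forall>p. stationary_prob N E \<mu> p \<longrightarrow>
                    (\<forall>w \<in> admissible_words N E. p w = Pi_W N E \<mu> \<alpha> w))))"
proof -
  have nbex: "\<exists>b. E a b" if a: "a \<in> {1..N}" for a
  proof -
    obtain u v where uv: "E u v"
      using assms(3) unfolding bipartite_def by blast
    have uvV: "u \<in> {1..N}" "v \<in> {1..N}" "u \<noteq> v" using assms(1) uv unfolding simple_graph_def by blast+
    obtain b where b: "b \<in> {1..N}" "b \<noteq> a" using uvV by (cases "u = a") blast+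
    have "E\<^sup>*\<^sup>* a b" using assms(2) a b unfolding connected_graph_def by blast
    then show ?thesis
    proof (rule converse_rtranclpE)
      assume "a = b" then show ?thesis using b by simp
    next
      fix y assume "E a y" then show ?thesis by blast
    qed
  qed
  interpret fcfm N E \<mu>
    by unfold_locales (use assms(1,4) nbex in auto)
  show ?thesis by (rule main_loc)
qed



end
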